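(* Let $X$ be a convex metric space over a Boolean ring $B$ which is a convex closure of a subset $H\subseteq X$ with $0\in H$, and let $f:X\to Y$ be a contractive map into a metric space $Y$ over $B$ with $f(0)=0'$. Then $f^{-1}(0')$ equals the set of all convex combinations (in $X$) of elements of $\{0\}\cup\{\overline{d'(0',f(x))}\,x : x\in H\}$, where for $a\in B$ and $x\in X$, $ax$ denotes the convex combination of $x,0$ with coefficients $a,\bar a$.
   Context: $B$ is a Boolean ring ($a\vee b=a+b+ab$, $a\le b\iff ab=a$, $\bar a=1+a$; $a_1\oplus\cdots\oplus a_n$ denotes a sum of pairwise disjoint elements). A Boolean metric space over $B$: set $X$ with $d:X\times X\to B$, $d(x,y)=0\iff x=y$, symmetric, $d(x,z)\le d(x,y)\vee d(y,z)$. For $x_1,\dots,x_n\in X$, $a_i\in B$ with $a_1\oplus\cdots\oplus a_n=1$, $x$ is a convex combination of the $x_i$ with coefficients $a_i$ if $a_id(x,x_i)=0$ for all $i$; $X$ is convex if all such combinations exist; $X$ is a convex closure of $H\subseteq X$ if $X$ is convex and every element of $X$ is a convex combination of elements of $H$. $d'$ is the metric of $Y$. A map is contractive if $d'(f(x),f(y))\le d(x,y)$. *)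

theory Defs
  imports Main
begin

text \<open>The Boolean ring B (with unit) is modelled as a Boolean algebra 'b:
 ring product = inf, a \<vee> b = sup, ring zero/one = bot/top, complement = uminus,
 a \<le> b iff ab = a is the lattice order. For pairwise disjoint elements the ring sum
 coincides with the join.\<close>

primrec bsum :: "(nat \<Rightarrow> 'b::boolean_algebra) \<Rightarrow> nat \<Rightarrow> 'b" where
  "bsum a 0 = bot"
| "bsum a (Suc n) = sup (bsum a n) (a n)"

definition partition_of_unity :: "nat \<Rightarrow> (nat \<Rightarrow> 'b::boolean_algebra) \<Rightarrow> bool" where
  "partition_of_unity n a \<longleftrightarrow>
     (\<forall>i<n. \<forall>j<n. i \<noteq> j \<longrightarrow> inf (a i) (a j) = bot) \<and> bsum a n = top"

definition bool_metric :: "'a set \<Rightarrow> ('a \<Rightarrow> 'a \<Rightarrow> 'b::boolean_algebra) \<Rightarrow> bool" where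
  "bool_metric X d \<longleftrightarrow>
     (\<forall>x\<in>X. \<forall>y\<in>X. d x y = bot \<longleftrightarrow> x = y) \<and>
     (\<forall>x\<in>X. \<forall>y\<in>X. d x y = d y x) \<and>
     (\<forall>x\<in>X. \<forall>y\<in>X. \<forall>z\<in>X. d x z \<le> sup (d x y) (d y z))"

definition conv_comb ::
  "'a set \<Rightarrow> ('a \<Rightarrow> 'a \<Rightarrow> 'b::boolean_algebra) \<Rightarrow> 'a \<Rightarrow> nat \<Rightarrow> (nat \<Rightarrow> 'a) \<Rightarrow> (nat \<Rightarrow> 'b) \<Rightarrow> bool" where
  "conv_comb X d x n xs a \<longleftrightarrow>
     x \<in> X \<and> (\<forall>i<n. xs i \<in> X) \<and> partition_of_unity n a \<and>
     (\<forall>i<n. inf (a i) (d x (xs i)) = bot)"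

definition bool_convex :: "'a set \<Rightarrow> ('a \<Rightarrow> 'a \<Rightarrow> 'b::boolean_algebra) \<Rightarrow> bool" where
  "bool_convex X d \<longleftrightarrow>
     (\<forall>n xs a. (\<forall>i<n. xs i \<in> X) \<and> partition_of_unity n a \<longrightarrow>
        (\<exists>x. conv_comb X d x n xs a))"

definition convex_combs ::
  "'a set \<Rightarrow> ('a \<Rightarrow> 'a \<Rightarrow> 'b::boolean_algebra) \<Rightarrow> 'a set \<Rightarrow> 'a set" where
  "convex_combs X d S = {x. \<exists>n xs a. (\<forall>i<n. xs i \<in> S) \<and> conv_comb X d x n xs a}"

definition convex_closure_of ::
  "'a set \<Rightarrow> ('a \<Rightarrow> 'a \<Rightarrow> 'b::boolean_algebra) \<Rightarrow> 'a set \<Rightarrow> bool" where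
  "convex_closure_of X d H \<longleftrightarrow> H \<subseteq> X \<and> bool_convex X d \<and> X \<subseteq> convex_combs X d H"

definition contractive ::
  "'a set \<Rightarrow> ('a \<Rightarrow> 'a \<Rightarrow> 'b::boolean_algebra) \<Rightarrow> ('c \<Rightarrow> 'c \<Rightarrow> 'b) \<Rightarrow> ('a \<Rightarrow> 'c) \<Rightarrow> bool" where
  "contractive X d d' f \<longleftrightarrow> (\<forall>x\<in>X. \<forall>y\<in>X. d' (f x) (f y) \<le> d x y)"

text \<open>a x: the convex combination of x, z (z = the point 0) with coefficients a, -a
 (unique in a Boolean metric space)\<close>
definition smul ::
  "'a set \<Rightarrow> ('a \<Rightarrow> 'a \<Rightarrow> 'b::boolean_algebra) \<Rightarrow> 'a \<Rightarrow> 'b \<Rightarrow> 'a \<Rightarrow> 'a" where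
  "smul X d z a x = (THE y. conv_comb X d y 2 (\<lambda>i. if i = 0 then x else z)
                                            (\<lambda>i. if i = 0 then a else - a))"

end

theory Submission
  imports Defs
begin

lemma split_bot:
  fixes e c :: "'b::boolean_algebra"
  assumes "inf e c = bot" "inf (- e) c = bot" shows "c = bot"
proof -
  have "c = inf (sup e (- e)) c" by simp
  also have "\<dots> = sup (inf e c) (inf (- e) c)" by (rule inf_sup_distrib2)
  finally show ?thesis using assms by simp
qed

lemma le_sup_bot:
  fixes a c p q :: "'b::boolean_algebra"
  assumes "c \<le> sup p q" "inf a p = bot" "inf a q = bot" shows "inf a c = bot"
proof -
  have "inf a c \<le> inf a (sup p q)" using assms(1) inf_mono by blast
  also have "\<dots> = sup (inf a p) (inf a q)" by (rule inf_sup_distrib1)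
  finally show ?thesis using assms by (simp add: bot_unique)
qed

lemma le_bot:
  fixes a c p :: "'b::boolean_algebra"
  assumes "c \<le> p" "inf a p = bot" shows "inf a c = bot"
  using le_sup_bot[of c p p a] assms by simp

lemma bsum_inf:
  fixes a :: "nat \<Rightarrow> 'b::boolean_algebra"
  assumes "\<forall>i<n. inf (a i) c = bot" shows "inf (bsum a n) c = bot"
  using assms by (induction n) (auto simp: inf_sup_distrib2)

lemma pou_bot:
  fixes a :: "nat \<Rightarrow> 'b::boolean_algebra"
  assumes "partition_of_unity n a" "\<forall>i<n. inf (a i) c = bot" shows "c = bot"
  using bsum_inf[OF assms(2)] assms(1) unfolding partition_of_unity_def by simp

lemma conv2:
  "conv_comb X d y 2 (\<lambda>i. if i = 0 then x else z) (\<lambda>i. if i = 0 then a else b) \<longleftrightarrow>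
   y \<in> X \<and> x \<in> X \<and> z \<in> X \<and> partition_of_unity 2 (\<lambda>i. if i = 0 then a else b) \<and>
   inf a (d y x) = bot \<and> inf b (d y z) = bot"
  unfolding conv_comb_def numeral_2_eq_2 less_Suc_eq by auto

lemma smul_conv:
  fixes d :: "'a \<Rightarrow> 'a \<Rightarrow> 'b::boolean_algebra"
  assumes m: "bool_metric X d" and c: "bool_convex X d" and x: "x \<in> X" and z: "z \<in> X"
  shows "conv_comb X d (smul X d z a x) 2 (\<lambda>i. if i = 0 then x else z)
                                            (\<lambda>i. if i = 0 then a else - a)"
proof -
  let ?P = "\<lambda>y. conv_comb X d y 2 (\<lambda>i. if i = 0 then x else z) (\<lambda>i. if i = 0 then a else - a)"
  have pou: "partition_of_unity 2 (\<lambda>i. if i = 0 then a else - a)"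
    unfolding partition_of_unity_def numeral_2_eq_2
    by (auto simp: less_Suc_eq inf_commute)
  have ex: "\<exists>y. ?P y" using c pou x z unfolding bool_convex_def by auto
  have un: "y1 = y2" if "?P y1" "?P y2" for y1 y2
  proof -
    have y: "y1 \<in> X" "y2 \<in> X" and
      h1: "inf a (d y1 x) = bot" "inf a (d y2 x) = bot"
      and h2: "inf (-a) (d y1 z) = bot" "inf (-a) (d y2 z) = bot"
      using conv2[THEN iffD1, OF that(1)] conv2[THEN iffD1, OF that(2)] by auto
    have mm: "\<And>p q r. p \<in> X \<Longrightarrow> q \<in> X \<Longrightarrow> r \<in> X \<Longrightarrow> d p r \<le> sup (d p q) (d q r)"
       "\<And>p q. p \<in> X \<Longrightarrow> q \<in> X \<Longrightarrow> d p q = d q p"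
      using m unfolding bool_metric_def by blast+
    have "d y1 y2 \<le> sup (d y1 x) (d x y2)" "d y1 y2 \<le> sup (d y1 z) (d z y2)"
      "d x y2 = d y2 x" "d z y2 = d y2 z"
      using mm x z y by blast+
    hence "inf a (d y1 y2) = bot" "inf (-a) (d y1 y2) = bot"
      using le_sup_bot h1 h2 by metis+
    hence "d y1 y2 = bot" by (rule split_bot)
    thus ?thesis using m y unfolding bool_metric_def by auto
  qed
  have "\<exists>!y. ?P y" using ex un by blast
  hence "?P (THE y. ?P y)" by (rule theI')
  thus ?thesis unfolding smul_def .
qed

theorem mainTheorem20:
  fixes X :: "'a set" and d :: "'a \<Rightarrow> 'a \<Rightarrow> 'b::boolean_algebra"
    and Y :: "'c set" and d' :: "'c \<Rightarrow> 'c \<Rightarrow> 'b"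
    and H :: "'a set" and z :: 'a and z' :: 'c and f :: "'a \<Rightarrow> 'c"
  assumes "bool_metric X d"
    and "convex_closure_of X d H"
    and "z \<in> H"
    and "bool_metric Y d'"
    and "z' \<in> Y"
    and "f ` X \<subseteq> Y"
    and "contractive X d d' f"
    and "f z = z'"
  shows "{x \<in> X. f x = z'} =
           convex_combs X d (insert z {smul X d z (- d' z' (f x)) x | x. x \<in> H})"
proof -
  note m = assms(1) and m' = assms(4)
  have HX: "H \<subseteq> X" and cv: "bool_convex X d" and cl: "X \<subseteq> convex_combs X d H"
    using assms(2) unfolding convex_closure_of_def by auto
  have zX: "z \<in> X" using HX assms(3) by auto
  have tri: "\<And>x y w. x \<in> X \<Longrightarrow> y \<in> X \<Longrightarrow> w \<in> X \<Longrightarrow> d x w \<le> sup (d x y) (d y w)"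
    and sym: "\<And>x y. x \<in> X \<Longrightarrow> y \<in> X \<Longrightarrow> d x y = d y x"
    and eq: "\<And>x y. x \<in> X \<Longrightarrow> y \<in> X \<Longrightarrow> d x y = bot \<longleftrightarrow> x = y"
    using m unfolding bool_metric_def by auto
  have tri': "\<And>x y w. x \<in> Y \<Longrightarrow> y \<in> Y \<Longrightarrow> w \<in> Y \<Longrightarrow> d' x w \<le> sup (d' x y) (d' y w)"
    and sym': "\<And>x y. x \<in> Y \<Longrightarrow> y \<in> Y \<Longrightarrow> d' x y = d' y x"
    and eq': "\<And>x y. x \<in> Y \<Longrightarrow> y \<in> Y \<Longrightarrow> d' x y = bot \<longleftrightarrow> x = y"
    using m' unfolding bool_metric_def by auto
  have con: "\<And>x y. x \<in> X \<Longrightarrow> y \<in> X \<Longrightarrow> d' (f x) (f y) \<le> d x y"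
    using assms(7) unfolding contractive_def by auto
  have fY: "\<And>x. x \<in> X \<Longrightarrow> f x \<in> Y" using assms(6) by auto
  define w where "w h = smul X d z (- d' z' (f h)) h" for h
  have wc: "conv_comb X d (w h) 2 (\<lambda>i. if i = 0 then h else z)
              (\<lambda>i. if i = 0 then - d' z' (f h) else - (- d' z' (f h)))" if "h \<in> X" for h
    unfolding w_def by (rule smul_conv[OF m cv that zX])
  have wX: "w h \<in> X" and w1: "inf (- d' z' (f h)) (d (w h) h) = bot"
    and w2: "inf (d' z' (f h)) (d (w h) z) = bot" if "h \<in> X" for h
    using conv2[THEN iffD1, OF wc[OF that]] by auto
  have Sk: "s \<in> X \<and> f s = z'" if sS: "s \<in> insert z {w x | x. x \<in> H}" for s
  proof (cases "s = z")
    case True thus ?thesis using zX assms(8) by simp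
  next
    case False
    then obtain h where h: "h \<in> H" "s = w h" using sS by auto
    have hX: "h \<in> X" using h HX by auto
    let ?e = "d' z' (f h)"
    have a: "d' z' (f (w h)) \<le> sup ?e (d' (f h) (f (w h)))"
      using tri' assms(5) fY hX wX by blast
    have b: "d' (f h) (f (w h)) \<le> d (w h) h" using con[OF hX wX[OF hX]] sym hX wX by metis
    have c1: "inf (- ?e) (d' z' (f (w h))) = bot"
      by (rule le_sup_bot[OF a]) (simp, rule le_bot[OF b w1[OF hX]])
    have "d' z' (f (w h)) \<le> d (w h) z"
      using con[OF zX wX[OF hX]] sym zX wX hX assms(8) by metis
    hence c2: "inf ?e (d' z' (f (w h))) = bot" using le_bot w2 hX by blast
    have "d' z' (f (w h)) = bot" using split_bot[OF c2 c1] .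
    thus ?thesis using eq' assms(5) fY wX hX h by auto
  qed
  show ?thesis
  proof
    show "{x \<in> X. f x = z'} \<subseteq> convex_combs X d (insert z {smul X d z (- d' z' (f x)) x | x. x \<in> H})"
    proof
      fix x assume "x \<in> {x \<in> X. f x = z'}"
      hence xX: "x \<in> X" and fx: "f x = z'" by auto
      obtain n xs a where xs: "\<forall>i<n. xs i \<in> H" and cc: "conv_comb X d x n xs a"
        using cl xX unfolding convex_combs_def by auto
      have pa: "partition_of_unity n a" and ax: "\<forall>i<n. inf (a i) (d x (xs i)) = bot"
        using cc unfolding conv_comb_def by auto
      have "inf (a i) (d x (w (xs i))) = bot" if i: "i < n" for i
      proof -
        have hX: "xs i \<in> X" using xs i HX by auto
        let ?e = "d' z' (f (xs i))"
        have t: "d x (w (xs i)) \<le> sup (d x (xs i)) (d (xs i) (w (xs i)))"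
          using tri xX hX wX by blast
        have "?e \<le> d x (xs i)" using con[OF xX hX] fx by simp
        hence ae: "inf (a i) ?e = bot" using le_bot ax i by blast
        have "inf (a i) (d (w (xs i)) (xs i)) = bot"
        proof -
          have "a i \<le> - ?e" using ae by (simp add: inf_shunt)
          hence "inf (a i) (d (w (xs i)) (xs i)) \<le> inf (- ?e) (d (w (xs i)) (xs i))"
            by (rule inf_mono) simp
          thus ?thesis using w1[OF hX] by (simp add: bot_unique)
        qed
        hence "inf (a i) (d (xs i) (w (xs i))) = bot" using sym hX wX by metis
        thus ?thesis using le_sup_bot[OF t] ax i by blast
      qed
      hence "conv_comb X d x n (\<lambda>i. w (xs i)) a"
        using cc xs HX wX unfolding conv_comb_def by auto
      moreover have "\<forall>i<n. w (xs i) \<in> insert z {smul X d z (- d' z' (f x)) x | x. x \<in> H}"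
        using xs unfolding w_def by auto
      ultimately show "x \<in> convex_combs X d (insert z {smul X d z (- d' z' (f x)) x | x. x \<in> H})"
        unfolding convex_combs_def
        by (intro CollectI exI[of _ n] exI[of _ "\<lambda>i. w (xs i)"] exI[of _ a]) blast
    qed
  next
    show "convex_combs X d (insert z {smul X d z (- d' z' (f x)) x | x. x \<in> H}) \<subseteq> {x \<in> X. f x = z'}"
    proof
      fix x assume "x \<in> convex_combs X d (insert z {smul X d z (- d' z' (f x)) x | x. x \<in> H})"
      then obtain n xs a where xs: "\<forall>i<n. xs i \<in> insert z {w x | x. x \<in> H}"
        and cc: "conv_comb X d x n xs a"
        unfolding convex_combs_def w_def by auto
      have xX: "x \<in> X" and pa: "partition_of_unity n a"
        and ax: "\<forall>i<n. inf (a i) (d x (xs i)) = bot"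
        using cc unfolding conv_comb_def by auto
      have "inf (a i) (d' z' (f x)) = bot" if i: "i < n" for i
      proof -
        have s: "xs i \<in> X" "f (xs i) = z'" using Sk xs i by auto
        have "d' z' (f x) \<le> d x (xs i)"
          using con[OF xX s(1)] s sym' fY xX assms(5) by metis
        thus ?thesis using le_bot ax i by blast
      qed
      hence "d' z' (f x) = bot" using pou_bot[OF pa] by blast
      thus "x \<in> {x \<in> X. f x = z'}" using eq' assms(5) fY xX by auto
    qed
  qed
qed

end
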